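(* For every fixed positive integer $\ell$, the following problem can be solved in linear time: given an incomplete matrix $\mathbf{S}\in\{0,1,\square\}^{n\times \ell}$ with exactly $\ell$ columns and integers $\alpha\le\beta$, decide whether there is a completion $\mathbf{T}\in\{0,1\}^{n\times\ell}$ of $\mathbf{S}$ with $\alpha\le\gamma(\mathbf{T})$ and $\delta(\mathbf{T})\le\beta$.
   Context: The symbol $\square$ denotes a missing entry. A matrix $\mathbf{T}\in\{0,1\}^{n\times\ell}$ is a completion of $\mathbf{S}\in\{0,1,\square\}^{n\times\ell}$ if $\mathbf{T}[i,j]=\mathbf{S}[i,j]$ whenever $\mathbf{S}[i,j]\neq\square$. For row vectors $u,w\in\{0,1,\square\}^\ell$, $d(u,w)$ is the number of positions $j$ with $u[j]\ne w[j]$, $u[j]\neq\square$ and $w[j]\neq\square$ (Hamming distance). For a complete matrix $\mathbf{T}$ with rows $\mathbf{T}[1],\dots,\mathbf{T}[n]$, $\gamma(\mathbf{T})=\min_{i\ne i'}d(\mathbf{T}[i],\mathbf{T}[i'])$ and $\delta(\mathbf{T})=\max_{i\ne i'}d(\mathbf{T}[i],\mathbf{T}[i'])$. This decision problem is called Diameter Matrix Completion (DMC). *)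

theory Defs
  imports Main
begin

text \<open>An incomplete binary matrix is a list of rows; an entry is a bool option,
  where None is the missing entry (the box symbol), Some False is 0 and Some True is 1.
  A complete matrix is a list of rows of type bool list.\<close>

type_synonym imatrix = "bool option list list"
type_synonym cmatrix = "bool list list"

definition has_columns :: "nat \<Rightarrow> 'a list list \<Rightarrow> bool" where
  "has_columns l S \<longleftrightarrow> (\<forall>r\<in>set S. length r = l)"

definition hdist :: "bool option list \<Rightarrow> bool option list \<Rightarrow> nat" where
  "hdist u w = card {j. j < length u \<and> j < length w \<and> u ! j \<noteq> None \<and> w ! j \<noteq> None \<and> u ! j \<noteq> w ! j}"

definition is_completion :: "cmatrix \<Rightarrow> imatrix \<Rightarrow> bool" where
  "is_completion T S \<longleftrightarrow> length T = length S \<and>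
     (\<forall>i < length S. length (T ! i) = length (S ! i) \<and>
        (\<forall>j < length (S ! i). S ! i ! j \<noteq> None \<longrightarrow> S ! i ! j = Some (T ! i ! j)))"

definition pair_dists :: "cmatrix \<Rightarrow> nat set" where
  "pair_dists T = {hdist (map Some (T ! i)) (map Some (T ! i')) | i i'.
                     i < length T \<and> i' < length T \<and> i \<noteq> i'}"

definition gamma :: "cmatrix \<Rightarrow> nat" where
  "gamma T = Min (pair_dists T)"

definition delta :: "cmatrix \<Rightarrow> nat" where
  "delta T = Max (pair_dists T)"

text \<open>For matrices with fewer than two rows gamma and delta are
  taken over an empty set of pairs; we use the convention that the constraints are then
  vacuous (min of the empty set is +infinity, max is -infinity).\<close>
definition dmc_yes :: "imatrix \<Rightarrow> int \<Rightarrow> int \<Rightarrow> bool" where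
  "dmc_yes S \<alpha> \<beta> \<longleftrightarrow> (\<exists>T. is_completion T S \<and>
      (2 \<le> length T \<longrightarrow> \<alpha> \<le> int (gamma T) \<and> int (delta T) \<le> \<beta>))"

fun enc_cell :: "bool option \<Rightarrow> nat" where
  "enc_cell (Some False) = 1"
| "enc_cell (Some True) = 2"
| "enc_cell None = 3"

text \<open>Row separator 4; binary digits 0,1 are 5,6; minus sign 7; field separator 8.\<close>
fun bits :: "nat \<Rightarrow> nat list" where
  "bits n = (if n < 2 then [n] else bits (n div 2) @ [n mod 2])"

definition enc_int :: "int \<Rightarrow> nat list" where
  "enc_int k = (if k < 0 then [7] else []) @ map (\<lambda>b. b + 5) (bits (nat \<bar>k\<bar>))"

definition encode :: "imatrix \<Rightarrow> int \<Rightarrow> int \<Rightarrow> nat list" where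
  "encode S \<alpha> \<beta> = concat (map (\<lambda>r. map enc_cell r @ [4]) S) @ [8] @ enc_int \<alpha> @ [8] @ enc_int \<beta>"

datatype move = MoveL | MoveR | MoveN

record tm =
  tm_tapes :: nat
  tm_states :: "nat set"
  tm_symbols :: "nat set"
  tm_trans :: "nat \<Rightarrow> nat list \<Rightarrow> nat \<times> (nat \<times> move) list"
  tm_start :: nat
  tm_accept :: nat
  tm_reject :: nat

text \<open>A tape is (cells left of head in reverse order, head symbol, cells right of head);
  blank symbol is 0, tapes are two-way infinite.\<close>
type_synonym tape = "nat list \<times> nat \<times> nat list"
type_synonym config = "nat \<times> tape list"

definition wf_tm :: "tm \<Rightarrow> bool" where
  "wf_tm M \<longleftrightarrow> 1 \<le> tm_tapes M \<and> finite (tm_states M) \<and> finite (tm_symbols M) \<and>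
     0 \<in> tm_symbols M \<and> tm_start M \<in> tm_states M \<and> tm_accept M \<in> tm_states M \<and>
     tm_reject M \<in> tm_states M \<and> tm_accept M \<noteq> tm_reject M \<and>
     (\<forall>q \<in> tm_states M. \<forall>xs. length xs = tm_tapes M \<longrightarrow> set xs \<subseteq> tm_symbols M \<longrightarrow>
        fst (tm_trans M q xs) \<in> tm_states M \<and>
        length (snd (tm_trans M q xs)) = tm_tapes M \<and>
        (\<forall>a\<in>set (snd (tm_trans M q xs)). fst a \<in> tm_symbols M))"

fun move_tape :: "tape \<Rightarrow> nat \<times> move \<Rightarrow> tape" where
  "move_tape (l, h, r) (w, MoveL) = (case l of [] \<Rightarrow> ([], 0, w # r) | x # l' \<Rightarrow> (l', x, w # r))"
| "move_tape (l, h, r) (w, MoveR) = (case r of [] \<Rightarrow> (w # l, 0, []) | x # r' \<Rightarrow> (w # l, x, r'))"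
| "move_tape (l, h, r) (w, MoveN) = (l, w, r)"

definition tm_step :: "tm \<Rightarrow> config \<Rightarrow> config" where
  "tm_step M c = (let (q, ts) = c in
     if q = tm_accept M \<or> q = tm_reject M then c
     else (let (q', acts) = tm_trans M q (map (\<lambda>(l, h, r). h) ts)
           in (q', map2 move_tape ts acts)))"

definition tm_init :: "tm \<Rightarrow> nat list \<Rightarrow> config" where
  "tm_init M w = (tm_start M,
     (case w of [] \<Rightarrow> ([], 0, []) | x # xs \<Rightarrow> ([], x, xs)) # replicate (tm_tapes M - 1) ([], 0, []))"

definition tm_run :: "tm \<Rightarrow> nat list \<Rightarrow> nat \<Rightarrow> config" where
  "tm_run M w t = (tm_step M ^^ t) (tm_init M w)"

end

theory Submission
  imports Defs
begin


lemma dfa_tm: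
  fixes \<delta> :: "'s \<Rightarrow> nat \<Rightarrow> 's" and U :: "'s set"
  assumes fin: "finite U" and qs: "qs \<in> U" and acc: "acc \<in> U" and rej: "rej \<in> U" and ar: "acc \<noteq> rej"
    and cl: "\<And>q h. q \<in> U \<Longrightarrow> \<delta> q h \<in> U"
    and nh: "\<And>q h. q \<in> U \<Longrightarrow> q \<noteq> acc \<Longrightarrow> q \<noteq> rej \<Longrightarrow> h \<noteq> 0 \<Longrightarrow> \<delta> q h \<noteq> acc \<and> \<delta> q h \<noteq> rej"
    and qsn: "qs \<noteq> acc" "qs \<noteq> rej"
  shows "\<exists>M. wf_tm M \<and> {..8} \<subseteq> tm_symbols M \<and> (\<forall>w. 0 \<notin> set w \<longrightarrow>
     (\<delta> (foldl \<delta> qs w) 0 = acc \<longrightarrow> fst (tm_run M w (Suc (length w))) = tm_accept M) \<and>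
     (\<delta> (foldl \<delta> qs w) 0 = rej \<longrightarrow> fst (tm_run M w (Suc (length w))) = tm_reject M))"
proof -
  obtain f :: "'s \<Rightarrow> nat" and n where fU: "f ` U = {i. i < n}" and inj: "inj_on f U"
    using finite_imp_inj_to_nat_seg[OF fin] by blast
  define g where "g = inv_into U f"
  have gf: "\<And>q. q \<in> U \<Longrightarrow> g (f q) = q" using inj by (simp add: g_def)
  define M where "M = \<lparr>tm_tapes = 1, tm_states = f ` U, tm_symbols = {..8::nat},
      tm_trans = (\<lambda>q xs. (f (\<delta> (g q) (hd xs)), [(0::nat, MoveR)])),
      tm_start = f qs, tm_accept = f acc, tm_reject = f rej\<rparr>"
  have wf: "wf_tm M"
    unfolding wf_tm_def M_def using fin qs acc rej ar inj cl gf by (auto simp: inj_on_eq_iff)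
  define sym where "sym w k = (if k < length w then w ! k else (0::nat))" for w :: "nat list" and k
  have fold_in: "foldl \<delta> q xs \<in> U" if "q \<in> U" for q xs using that
    by (induction xs arbitrary: q) (auto simp: cl)
  have fold_n: "foldl \<delta> qs xs \<noteq> acc \<and> foldl \<delta> qs xs \<noteq> rej" if "0 \<notin> set xs" for xs
    using that
  proof (induction xs rule: rev_induct)
    case Nil then show ?case using qsn by simp
  next
    case (snoc x xs) then show ?case using nh[OF fold_in[OF qs], of xs x] by auto
  qed
  have stepc: "tm_step M (f q, [(L, s, R)]) = (f (\<delta> q s), [move_tape (L, s, R) (0, MoveR)])"
    if "q \<in> U" "q \<noteq> acc" "q \<noteq> rej" for q L s R
  proof -
    have "f q \<noteq> f acc" "f q \<noteq> f rej" using that acc rej inj by (auto simp: inj_on_eq_iff)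
    then show ?thesis using that gf by (simp add: tm_step_def M_def)
  qed
  have inv: "tm_run M w k = (f (foldl \<delta> qs (take k w)), [(replicate k 0, sym w k, drop (Suc k) w)])"
     if w0: "0 \<notin> set w" and "k \<le> length w" for w k
    using that(2)
  proof (induction k)
    case 0 then show ?case by (cases w) (auto simp: tm_run_def tm_init_def M_def sym_def)
  next
    case (Suc k)
    let ?q = "foldl \<delta> qs (take k w)"
    have qU: "?q \<in> U" using fold_in qs by blast
    have nn: "?q \<noteq> acc" "?q \<noteq> rej" using fold_n[of "take k w"] w0 by (auto dest: in_set_takeD)
    have k: "k < length w" using Suc.prems by simp
    have "tm_run M w (Suc k) = tm_step M (tm_run M w k)" by (simp add: tm_run_def)
    also have "\<dots> = (f (\<delta> ?q (w!k)), [move_tape (replicate k 0, w!k, drop (Suc k) w) (0, MoveR)])"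
      using Suc k stepc[OF qU nn] by (simp add: sym_def)
    also have "\<dots> = (f (foldl \<delta> qs (take (Suc k) w)), [(replicate (Suc k) 0, sym w (Suc k), drop (Suc (Suc k)) w)])"
    proof (cases "Suc k < length w")
      case True
      then have "drop (Suc k) w = w ! Suc k # drop (Suc (Suc k)) w" by (simp add: Cons_nth_drop_Suc)
      then show ?thesis using True k by (simp add: take_Suc_conv_app_nth sym_def)
    next
      case False
      then have "take (Suc k) w = w" using k by simp
      then have "foldl \<delta> qs w = \<delta> ?q (w!k)"
        using take_Suc_conv_app_nth[OF k] by (metis foldl_Cons foldl_Nil foldl_append)
      then show ?thesis using k False by (simp add: sym_def)
    qed
    finally show ?case .
  qed
  have fin_run: "fst (tm_run M w (Suc (length w))) = f (\<delta> (foldl \<delta> qs w) 0)" if w0: "0 \<notin> set w" for w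
  proof -
    have nn: "foldl \<delta> qs w \<noteq> acc" "foldl \<delta> qs w \<noteq> rej" using fold_n w0 by auto
    have "tm_run M w (Suc (length w)) = tm_step M (tm_run M w (length w))" by (simp add: tm_run_def)
    also have "\<dots> = (f (\<delta> (foldl \<delta> qs w) 0), [move_tape (replicate (length w) 0, 0, []) (0, MoveR)])"
      using inv[OF w0, of "length w"] stepc[OF fold_in[OF qs] nn] by (simp add: sym_def)
    finally show ?thesis by simp
  qed
  show ?thesis
    apply (rule exI[of _ M])
    using wf fin_run by (simp add: M_def)
qed



type_synonym prof = "(bool list set \<times> bool) set"

datatype st = Rows prof "bool option list" | Alpha prof bool nat | Beta prof int bool nat
  | Junk | Acc | Rej

definition comp_row :: "bool list \<Rightarrow> bool option list \<Rightarrow> bool" where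
  "comp_row u r \<longleftrightarrow> length u = length r \<and> (\<forall>j<length r. r!j \<noteq> None \<longrightarrow> r!j = Some (u!j))"

definition addrow :: "prof \<Rightarrow> bool option list \<Rightarrow> prof" where
  "addrow P r = {(insert u A, d \<or> u \<in> A) | A d u. (A, d) \<in> P \<and> comp_row u r}"

definition hdd :: "bool list \<Rightarrow> bool list \<Rightarrow> int" where
  "hdd u v = int (hdist (map Some u) (map Some v))"

definition valid :: "int \<Rightarrow> int \<Rightarrow> bool list set \<Rightarrow> bool \<Rightarrow> bool" where
  "valid a b A d \<longleftrightarrow> (\<forall>u\<in>A. \<forall>v\<in>A. u \<noteq> v \<longrightarrow> a \<le> hdd u v \<and> hdd u v \<le> b) \<and> (d \<longrightarrow> a \<le> 0 \<and> 0 \<le> b)"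

definition dec_cell :: "nat \<Rightarrow> bool option" where
  "dec_cell s = (if s = 1 then Some False else if s = 2 then Some True else None)"

definition sgnval :: "bool \<Rightarrow> nat \<Rightarrow> int" where
  "sgnval ng v = (if ng then - int v else int v)"

fun dstep :: "nat \<Rightarrow> st \<Rightarrow> nat \<Rightarrow> st" where
  "dstep l (Rows P cur) s = (if s \<in> {1,2,3} then (if length cur < l then Rows P (cur @ [dec_cell s]) else Junk)
     else if s = 4 then (if length cur = l then Rows (addrow P cur) [] else Junk)
     else if s = 8 then Alpha P False 0 else Junk)"
| "dstep l (Alpha P ng v) s = (if s = 7 then Alpha P True v
     else if s = 5 \<or> s = 6 then Alpha P ng (min (2*v + (s-5)) (Suc l))
     else if s = 8 then Beta P (sgnval ng v) False 0 else Junk)"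
| "dstep l (Beta P a ng v) s = (if s = 7 then Beta P a True v
     else if s = 5 \<or> s = 6 then Beta P a ng (min (2*v + (s-5)) (Suc l))
     else if s = 0 then (if \<exists>(A,d)\<in>P. valid a (sgnval ng v) A d then Acc else Rej) else Junk)"
| "dstep l Junk s = Junk"
| "dstep l Acc s = Acc"
| "dstep l Rej s = Rej"

definition PU :: "nat \<Rightarrow> (bool list set \<times> bool) set" where
  "PU l = Pow {xs. length xs = l} \<times> UNIV"

definition UU :: "nat \<Rightarrow> st set" where
  "UU l = (\<lambda>(P,c). Rows P c) ` (Pow (PU l) \<times> {c. set c \<subseteq> UNIV \<and> length c \<le> l})
     \<union> (\<lambda>(P,b,v). Alpha P b v) ` (Pow (PU l) \<times> UNIV \<times> {..Suc l})
     \<union> (\<lambda>(P,a,b,v). Beta P a b v) ` (Pow (PU l) \<times> {- int (Suc l)..int (Suc l)} \<times> UNIV \<times> {..Suc l})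
     \<union> {Junk, Acc, Rej}"

lemma fin_len: "finite {xs :: bool list. length xs = l}"
  by (rule finite_subset[OF _ finite_lists_length_le[of "UNIV :: bool set" l]]) auto

lemma fin_UU: "finite (UU l)"
proof -
  have "finite (PU l)" using fin_len by (simp add: PU_def)
  moreover have "finite {c :: bool option list. set c \<subseteq> UNIV \<and> length c \<le> l}"
    by (rule finite_lists_length_le) simp
  ultimately show ?thesis unfolding UU_def by auto
qed

lemma addrow_PU: "P \<subseteq> PU l \<Longrightarrow> length r = l \<Longrightarrow> addrow P r \<subseteq> PU l"
  by (auto simp: addrow_def PU_def comp_row_def)

lemma sgnval_range: "v \<le> Suc l \<Longrightarrow> sgnval b v \<in> {- int (Suc l)..int (Suc l)}"
  by (auto simp: sgnval_def)

lemma UU_Rows[simp]: "Rows P c \<in> UU l \<longleftrightarrow> P \<subseteq> PU l \<and> length c \<le> l"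
  unfolding UU_def by (auto intro!: image_eqI[where x="(P,c)"])
lemma UU_Alpha[simp]: "Alpha P b v \<in> UU l \<longleftrightarrow> P \<subseteq> PU l \<and> v \<le> Suc l"
  unfolding UU_def by (auto intro!: image_eqI[where x="(P,b,v)"])
lemma UU_Beta[simp]: "Beta P a b v \<in> UU l \<longleftrightarrow> P \<subseteq> PU l \<and> a \<in> {- int (Suc l)..int (Suc l)} \<and> v \<le> Suc l"
  unfolding UU_def by (auto intro!: image_eqI[where x="(P,a,b,v)"])
lemma UU_other[simp]: "Junk \<in> UU l" "Acc \<in> UU l" "Rej \<in> UU l"
  unfolding UU_def by auto

lemma cl_UU: "q \<in> UU l \<Longrightarrow> dstep l q h \<in> UU l"
  by (cases q) (auto simp: addrow_PU sgnval_def)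



declare bits.simps[simp del]

lemma enc_cell_range: "enc_cell c \<in> {1,2,3}" and dec_enc: "dec_cell (enc_cell c) = c"
  by (cases c rule: enc_cell.cases; simp add: dec_cell_def)+

lemma R1: "length cur + length r \<le> l \<Longrightarrow>
  foldl (dstep l) (Rows P cur) (map enc_cell r) = Rows P (cur @ r)"
proof (induction r arbitrary: cur)
  case Nil then show ?case by simp
next
  case (Cons c r)
  have "dstep l (Rows P cur) (enc_cell c) = Rows P (cur @ [c])"
    using Cons.prems enc_cell_range[of c] by (simp add: dec_enc)
  then show ?case using Cons by simp
qed

lemma R2: "length r = l \<Longrightarrow> foldl (dstep l) (Rows P []) (map enc_cell r @ [4]) = Rows (addrow P r) []"
  using R1[of "[]" r l P] by simp

lemma R3: "has_columns l S \<Longrightarrow>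
  foldl (dstep l) (Rows P []) (concat (map (\<lambda>r. map enc_cell r @ [4]) S)) = Rows (foldl addrow P S) []"
proof (induction S arbitrary: P)
  case Nil then show ?case by simp
next
  case (Cons r S)
  then show ?case using R2[of r l P] by (simp add: has_columns_def)
qed

lemma bits01: "set (bits n) \<subseteq> {0,1}"
proof (induction n rule: bits.induct)
  case (1 n) then show ?case by (subst bits.simps) auto
qed

lemma bits_val: "foldl (\<lambda>v b. 2*v+b) 0 (bits n) = n"
proof (induction n rule: bits.induct)
  case (1 n) then show ?case by (subst bits.simps) auto
qed

lemma clampfold: "foldl (\<lambda>v b. min (2*v+b) L) (min x L) bs = min (foldl (\<lambda>v b. 2*v+b) x bs) (L::nat)"
proof (induction bs arbitrary: x)
  case Nil then show ?case by simp
next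
  case (Cons b bs)
  have "min (2 * min x L + b) L = min (2*x+b) L" by simp
  then show ?case using Cons[of "2*x+b"] by simp
qed

lemma A1: "set bs \<subseteq> {0,1} \<Longrightarrow> foldl (dstep l) (Alpha P ng v) (map (\<lambda>b. b+5) bs)
   = Alpha P ng (foldl (\<lambda>v b. min (2*v+b) (Suc l)) v bs)"
  by (induction bs arbitrary: v) auto

lemma B1: "set bs \<subseteq> {0,1} \<Longrightarrow> foldl (dstep l) (Beta P a ng v) (map (\<lambda>b. b+5) bs)
   = Beta P a ng (foldl (\<lambda>v b. min (2*v+b) (Suc l)) v bs)"
  by (induction bs arbitrary: v) auto

lemma clamp_bits: "foldl (\<lambda>v b. min (2*v+b) (Suc l)) 0 (bits n) = min n (Suc l)"
  using clampfold[of "Suc l" 0 "bits n"] bits_val[of n] by simp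

lemma A2: "foldl (dstep l) (Alpha P False 0) (enc_int a) = Alpha P (a < 0) (min (nat \<bar>a\<bar>) (Suc l))"
  using A1[OF bits01, of l P] clamp_bits by (simp add: enc_int_def)

lemma B2: "foldl (dstep l) (Beta P x False 0) (enc_int a) = Beta P x (a < 0) (min (nat \<bar>a\<bar>) (Suc l))"
  using B1[OF bits01, of l P] clamp_bits by (simp add: enc_int_def)

definition clamp :: "nat \<Rightarrow> int \<Rightarrow> int" where
  "clamp l a = sgnval (a < 0) (min (nat \<bar>a\<bar>) (Suc l))"

lemma run_all: "has_columns l S \<Longrightarrow>
  foldl (dstep l) (Rows P []) (encode S a b) = Beta (foldl addrow P S) (clamp l a) (b < 0) (min (nat \<bar>b\<bar>) (Suc l))"
  by (simp add: encode_def R3 A2 B2 clamp_def)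

lemma enc_nz: "0 \<notin> set (encode S a b)"
proof -
  have "0 \<notin> set (enc_int x)" for x using bits01[of "nat \<bar>x\<bar>"] by (auto simp: enc_int_def)
  moreover have ec: "enc_cell c \<noteq> 0" for c using enc_cell_range[of c] by auto
  ultimately show ?thesis by (auto simp: encode_def ec)
qed

lemma clamp_cmp: "0 \<le> x \<Longrightarrow> x \<le> int l \<Longrightarrow> (clamp l a \<le> x \<longleftrightarrow> a \<le> x) \<and> (x \<le> clamp l a \<longleftrightarrow> x \<le> a)"
  by (auto simp: clamp_def sgnval_def min_def)



definition sig :: "bool option list list \<Rightarrow> prof" where
  "sig S = {(set T, \<not> distinct T) | T. list_all2 comp_row T S}"

lemma sig_snoc: "addrow (sig S) r = sig (S @ [r])"
proof
  show "addrow (sig S) r \<subseteq> sig (S @ [r])"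
  proof
    fix x assume "x \<in> addrow (sig S) r"
    then obtain T u where x: "x = (insert u (set T), \<not> distinct T \<or> u \<in> set T)"
      and T: "list_all2 comp_row T S" and u: "comp_row u r"
      by (auto simp: addrow_def sig_def)
    have "list_all2 comp_row (T @ [u]) (S @ [r])" using T u by (simp add: list_all2_appendI)
    moreover have "x = (set (T @ [u]), \<not> distinct (T @ [u]))" using x by auto
    ultimately show "x \<in> sig (S @ [r])" unfolding sig_def by blast
  qed
next
  show "sig (S @ [r]) \<subseteq> addrow (sig S) r"
  proof
    fix x assume "x \<in> sig (S @ [r])"
    then obtain T where x: "x = (set T, \<not> distinct T)" and T: "list_all2 comp_row T (S @ [r])"
      by (auto simp: sig_def)
    then obtain T' u where "T = T' @ [u]" "list_all2 comp_row T' S" "comp_row u r"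
      by (auto simp: list_all2_append2 list_all2_Cons2)
    then have m: "(set T', \<not> distinct T') \<in> sig S" and "comp_row u r"
      and "x = (insert u (set T'), \<not> distinct T' \<or> u \<in> set T')" using x by (auto simp: sig_def)
    then show "x \<in> addrow (sig S) r" unfolding addrow_def by blast
  qed
qed

lemma sig_fold: "foldl addrow {({}, False)} S = sig S"
proof (induction S rule: rev_induct)
  case Nil then show ?case by (simp add: sig_def)
next
  case (snoc r S) then show ?case by (simp add: sig_snoc)
qed

lemma compl_iff: "is_completion T S \<longleftrightarrow> list_all2 comp_row T S"
  by (auto simp: is_completion_def list_all2_conv_all_nth comp_row_def)

lemma hdd_self: "hdd u u = 0" by (simp add: hdd_def hdist_def)

lemma hdd_le: "hdd u v \<le> int (length u)"
proof -
  have "hdist (map Some u) (map Some v) \<le> card {..<length u}"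
    unfolding hdist_def by (rule card_mono) auto
  then show ?thesis by (simp add: hdd_def)
qed

lemma cond_pairs:
  "(2 \<le> length T \<longrightarrow> a \<le> int (gamma T) \<and> int (delta T) \<le> b) \<longleftrightarrow>
   (\<forall>i<length T. \<forall>i'<length T. i \<noteq> i' \<longrightarrow> a \<le> hdd (T!i) (T!i') \<and> hdd (T!i) (T!i') \<le> b)"
proof (cases "2 \<le> length T")
  case False
  then show ?thesis by auto
next
  case True
  let ?D = "pair_dists T"
  have fin: "finite ?D"
  proof -
    have "?D \<subseteq> (\<lambda>(i,i'). hdist (map Some (T ! i)) (map Some (T ! i'))) ` ({..<length T} \<times> {..<length T})"
      unfolding pair_dists_def by auto
    then show ?thesis by (rule finite_subset) auto
  qed
  have mem: "hdist (map Some (T ! i)) (map Some (T ! i')) \<in> ?D" if "i<length T" "i'<length T" "i\<noteq>i'" for i i'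
    using that unfolding pair_dists_def by blast
  have "hdist (map Some (T ! 0)) (map Some (T ! 1)) \<in> ?D" using True by (intro mem) auto
  then have ne: "?D \<noteq> {}" by blast
  show ?thesis
  proof
    assume h: "2 \<le> length T \<longrightarrow> a \<le> int (gamma T) \<and> int (delta T) \<le> b"
    show "\<forall>i<length T. \<forall>i'<length T. i \<noteq> i' \<longrightarrow> a \<le> hdd (T!i) (T!i') \<and> hdd (T!i) (T!i') \<le> b"
    proof (intro allI impI)
      fix i i' assume "i<length T" "i'<length T" "i\<noteq>i'"
      then have m: "hdist (map Some (T ! i)) (map Some (T ! i')) \<in> ?D" by (rule mem)
      have "gamma T \<le> hdist (map Some (T ! i)) (map Some (T ! i'))"
        unfolding gamma_def using Min_le[OF fin m] .
      moreover have "hdist (map Some (T ! i)) (map Some (T ! i')) \<le> delta T"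
        unfolding delta_def using Max_ge[OF fin m] .
      ultimately show "a \<le> hdd (T!i) (T!i') \<and> hdd (T!i) (T!i') \<le> b" using h True
        by (auto simp: hdd_def)
    qed
  next
    assume h: "\<forall>i<length T. \<forall>i'<length T. i \<noteq> i' \<longrightarrow> a \<le> hdd (T!i) (T!i') \<and> hdd (T!i) (T!i') \<le> b"
    have "Min ?D \<in> ?D" "Max ?D \<in> ?D" using Min_in[OF fin ne] Max_in[OF fin ne] by auto
    then show "2 \<le> length T \<longrightarrow> a \<le> int (gamma T) \<and> int (delta T) \<le> b"
      using h unfolding gamma_def delta_def pair_dists_def hdd_def by fastforce
  qed
qed

lemma pairs_valid:
  "(\<forall>i<length T. \<forall>i'<length T. i \<noteq> i' \<longrightarrow> a \<le> hdd (T!i) (T!i') \<and> hdd (T!i) (T!i') \<le> b)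
   \<longleftrightarrow> valid a b (set T) (\<not> distinct T)"
proof
  assume h: "\<forall>i<length T. \<forall>i'<length T. i \<noteq> i' \<longrightarrow> a \<le> hdd (T!i) (T!i') \<and> hdd (T!i) (T!i') \<le> b"
  have 1: "a \<le> hdd u v \<and> hdd u v \<le> b" if uT: "u \<in> set T" and vT: "v \<in> set T" and uv: "u \<noteq> v" for u v
  proof -
    obtain i where i: "i<length T" "T!i = u" using uT by (auto simp: in_set_conv_nth)
    obtain i' where i': "i'<length T" "T!i' = v" using vT by (auto simp: in_set_conv_nth)
    note ii = i(1) i'(1) i(2) i'(2)
    then have "i \<noteq> i'" using uv by auto
    from h[rule_format, OF ii(1,2) this] show ?thesis using ii by simp
  qed
  have 2: "a \<le> 0 \<and> 0 \<le> b" if nd: "\<not> distinct T"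
  proof -
    obtain i i' where ii: "i<length T" "i'<length T" "i \<noteq> i'" "T!i = T!i'" using nd by (auto simp: distinct_conv_nth)
    from h[rule_format, OF ii(1-3)] show ?thesis using ii(4) hdd_self by simp
  qed
  show "valid a b (set T) (\<not> distinct T)" using 1 2 by (auto simp: valid_def)
next
  assume v: "valid a b (set T) (\<not> distinct T)"
  show "\<forall>i<length T. \<forall>i'<length T. i \<noteq> i' \<longrightarrow> a \<le> hdd (T!i) (T!i') \<and> hdd (T!i) (T!i') \<le> b"
  proof (intro allI impI)
    fix i i' assume h: "i<length T" "i'<length T" "i\<noteq>i'"
    show "a \<le> hdd (T!i) (T!i') \<and> hdd (T!i) (T!i') \<le> b"
    proof (cases "T!i = T!i'")
      case True
      then have "\<not> distinct T" using h by (auto simp: distinct_conv_nth)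
      then show ?thesis using v True hdd_self by (auto simp: valid_def)
    next
      case False
      have "T!i \<in> set T" "T!i' \<in> set T" using h by auto
      then show ?thesis using v False unfolding valid_def by blast
    qed
  qed
qed

lemma valid_clamp: "A \<subseteq> {xs. length xs = l} \<Longrightarrow> valid (clamp l a) (clamp l b) A d \<longleftrightarrow> valid a b A d"
proof -
  assume A: "A \<subseteq> {xs. length xs = l}"
  have r: "0 \<le> hdd u v \<and> hdd u v \<le> int l" if "u \<in> A" for u v
    using hdd_le[of u v] A that by (auto simp: hdd_def)
  have e: "(clamp l a \<le> hdd u v \<longleftrightarrow> a \<le> hdd u v) \<and> (hdd u v \<le> clamp l b \<longleftrightarrow> hdd u v \<le> b)"
    if "u \<in> A" for u v
    using clamp_cmp[of "hdd u v" l a] clamp_cmp[of "hdd u v" l b] r[OF that, of v] by blast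
  have z: "(clamp l a \<le> 0 \<longleftrightarrow> a \<le> 0) \<and> (0 \<le> clamp l b \<longleftrightarrow> 0 \<le> b)"
    using clamp_cmp[of 0 l a] clamp_cmp[of 0 l b] by simp
  have q: "(\<forall>u\<in>A. \<forall>v\<in>A. u \<noteq> v \<longrightarrow> clamp l a \<le> hdd u v \<and> hdd u v \<le> clamp l b) \<longleftrightarrow>
           (\<forall>u\<in>A. \<forall>v\<in>A. u \<noteq> v \<longrightarrow> a \<le> hdd u v \<and> hdd u v \<le> b)"
    apply (intro ball_cong refl)
    using e by simp
  show ?thesis unfolding valid_def using q z by simp
qed

lemma dmc_char: "has_columns l S \<Longrightarrow>
  dmc_yes S a b \<longleftrightarrow> (\<exists>(A,d)\<in>sig S. valid (clamp l a) (clamp l b) A d)"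
proof -
  assume hc: "has_columns l S"
  have len: "set T \<subseteq> {xs. length xs = l}" if "list_all2 comp_row T S" for T
    using that hc by (auto simp: list_all2_conv_all_nth comp_row_def has_columns_def in_set_conv_nth) (metis nth_mem)
  have "dmc_yes S a b \<longleftrightarrow> (\<exists>T. list_all2 comp_row T S \<and> valid a b (set T) (\<not> distinct T))"
    unfolding dmc_yes_def compl_iff cond_pairs pairs_valid by simp
  also have "\<dots> \<longleftrightarrow> (\<exists>T. list_all2 comp_row T S \<and> valid (clamp l a) (clamp l b) (set T) (\<not> distinct T))"
    apply (rule iffI; elim exE conjE; rule exI, rule conjI, assumption)
    by (simp_all add: valid_clamp[OF len])
  also have "\<dots> \<longleftrightarrow> (\<exists>(A,d)\<in>sig S. valid (clamp l a) (clamp l b) A d)"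
    unfolding sig_def by blast
  finally show ?thesis .
qed

theorem lemma1:
  fixes l :: nat
  assumes "0 < l"
  shows "\<exists>(M :: tm) (c :: nat). wf_tm M \<and> {..8} \<subseteq> tm_symbols M \<and>
    (\<forall>(S :: imatrix) (\<alpha> :: int) (\<beta> :: int).
       S \<noteq> [] \<and> has_columns l S \<and> \<alpha> \<le> \<beta> \<longrightarrow>
       (\<exists>t \<le> c * length (encode S \<alpha> \<beta>) + c.
          fst (tm_run M (encode S \<alpha> \<beta>) t) =
            (if dmc_yes S \<alpha> \<beta> then tm_accept M else tm_reject M)))"
proof -
  have q0: "Rows {({}, False)} [] \<in> UU l" by (simp add: PU_def)
  have nh: "dstep l q h \<noteq> Acc \<and> dstep l q h \<noteq> Rej" if "q \<noteq> Acc" "q \<noteq> Rej" "h \<noteq> 0" for q h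
    using that by (cases q) auto
  obtain M where M: "wf_tm M" "{..8} \<subseteq> tm_symbols M"
    and run: "\<And>w. 0 \<notin> set w \<Longrightarrow>
     (dstep l (foldl (dstep l) (Rows {({}, False)} []) w) 0 = Acc \<longrightarrow> fst (tm_run M w (Suc (length w))) = tm_accept M) \<and>
     (dstep l (foldl (dstep l) (Rows {({}, False)} []) w) 0 = Rej \<longrightarrow> fst (tm_run M w (Suc (length w))) = tm_reject M)"
    using dfa_tm[where \<delta>="dstep l" and U="UU l" and qs="Rows {({}, False)} []" and acc=Acc and rej=Rej,
       OF fin_UU q0 UU_other(2) UU_other(3) _ cl_UU nh] by auto
  have "fst (tm_run M (encode S a b) (Suc (length (encode S a b)))) =
            (if dmc_yes S a b then tm_accept M else tm_reject M)" if hc: "has_columns l S" for S a b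
  proof -
    have "dstep l (foldl (dstep l) (Rows {({}, False)} []) (encode S a b)) 0 =
          (if dmc_yes S a b then Acc else Rej)"
      using run_all[OF hc] dmc_char[OF hc] by (simp add: sig_fold clamp_def)
    then show ?thesis using run[OF enc_nz, of S a b] by auto
  qed
  then show ?thesis using M by (intro exI[of _ M] exI[of _ 1]) auto
qed

end
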